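(* Let $P_0,P_1,P_2\in\mathbb H$ be distinct, let $\alpha:=-1+\langle P_0,P_1\rangle+\langle P_1,P_2\rangle+\langle P_2,P_0\rangle$, $\chi:=\langle P_0\tilde\times P_1,P_2\rangle$, $d_0:=\sqrt{1-2\langle P_1,P_2\rangle}$, $d_1:=\sqrt{1-2\langle P_2,P_0\rangle}$, $d_2:=\sqrt{1-2\langle P_0,P_1\rangle}$ (indices in $\mathbb Z/3\mathbb Z$), and $\gamma:=3(d_0^2+1)(d_1^2+1)(d_2^2+1)$. Then $$(2\chi)^2\le\frac13\sum_{i=0}^2 d_i^2(d_{i+1}^2-3)(d_{i+2}^2-3)\qquad\text{and}\qquad -24\alpha\chi\le\gamma.$$
   Context: $\langle v,w\rangle=-v_1w_1+v_2w_2+v_3w_3$ on $\mathbb R^3$; $\mathbb H=\{P\in\mathbb R^3:\langle P,P\rangle=-1,\ P_1\ge1\}$; $v\tilde\times w:=J(v\times w)$ with $J=\mathrm{diag}(-1,1,1)$ and $\times$ the Euclidean cross product. *)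

theory Defs
  imports "HOL-Analysis.Analysis"
begin

definition mink :: "real^3 \<Rightarrow> real^3 \<Rightarrow> real" where
  "mink v w = - (v$1 * w$1) + v$2 * w$2 + v$3 * w$3"

definition hyp :: "(real^3) set" where
  "hyp = {P. mink P P = -1 \<and> P$1 \<ge> 1}"

definition Jmap :: "real^3 \<Rightarrow> real^3" where
  "Jmap v = (\<chi> i. if i = 1 then - (v$i) else v$i)"

definition lcross :: "real^3 \<Rightarrow> real^3 \<Rightarrow> real^3" where
  "lcross v w = Jmap (cross3 v w)"

end

theory Submission imports Defs begin
lemma chi_eq: "mink (lcross P0 P1) P2 = (P0$2*P1$3 - P0$3*P1$2)*P2$1 + (P0$3*P1$1 - P0$1*P1$3)*P2$2 + (P0$1*P1$2 - P0$2*P1$1)*P2$3"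
  unfolding mink_def lcross_def Jmap_def by (simp add: cross3_def vector_def algebra_simps)

lemma rcs_real:
  fixes x1 x2 x3 y1 y2 y3 :: real
  assumes "-x1*x1 + x2*x2 + x3*x3 = -1" "x1 \<ge> 1" "-y1*y1 + y2*y2 + y3*y3 = -1" "y1 \<ge> 1"
  shows "x1*y1 \<ge> 1 + x2*y2 + x3*y3"
proof (cases "1 + x2*y2 + x3*y3 \<le> 0")
  case True
  have "x1*y1 \<ge> 1" using assms(2,4) by (metis mult_mono' mult_1 order_trans zero_le_one)
  then show ?thesis using True by linarith
next
  case False
  have e: "(x1*y1)^2 - (1 + x2*y2 + x3*y3)^2 = (x2*y3-x3*y2)^2 + (x2-y2)^2 + (x3-y3)^2"
  proof -
    have "x1*x1 = 1 + x2*x2 + x3*x3" "y1*y1 = 1 + y2*y2+y3*y3" using assms by linarith+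
    moreover have "(x1*y1)^2 = (x1*x1)*(y1*y1)" by (simp add: power2_eq_square algebra_simps)
    ultimately have "(x1*y1)^2 = (1 + x2*x2 + x3*x3)*(1 + y2*y2+y3*y3)" by simp
    then show ?thesis by (simp add: power2_eq_square algebra_simps)
  qed
  have "(1 + x2*y2 + x3*y3)^2 \<le> (x1*y1)^2" using e
    by (smt (verit) zero_le_power2)
  moreover have "x1*y1 \<ge> 0" using assms by simp
  ultimately show ?thesis using power2_le_imp_le by blast
qed

lemma rcs: assumes "P \<in> hyp" "Q \<in> hyp" shows "mink P Q \<le> -1"
  using rcs_real[of "P$1" "P$2" "P$3" "Q$1" "Q$2" "Q$3"] assms unfolding hyp_def mink_def by auto

lemma gram:
  fixes P0 P1 P2 :: "real^3"
  shows "(mink (lcross P0 P1) P2)^2 = -( mink P0 P0 * mink P1 P1 * mink P2 P2 + 2 * mink P0 P1 * mink P1 P2 * mink P2 P0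
     - mink P0 P0 * (mink P1 P2)^2 - mink P1 P1 * (mink P2 P0)^2 - mink P2 P2 * (mink P0 P1)^2)"
  unfolding chi_eq unfolding mink_def by algebra

lemma final_real:
  fixes a b c chi :: real
  assumes "a \<ge> 1" "b \<ge> 1" "c \<ge> 1" "chi^2 = 1 + 2*a*b*c - a^2 - b^2 - c^2"
  shows "(2*chi)^2 \<le> (1/3) * ((1+2*a)*(1+2*b - 3)*(1+2*c-3) + (1+2*b)*(1+2*c-3)*(1+2*a-3) + (1+2*c)*(1+2*a-3)*(1+2*b-3))
     \<and> -24 * (-1 - c - a - b) * chi \<le> 3 * (1+2*a+1)*(1+2*b+1)*(1+2*c+1)"
proof
  have "0 \<le> (a-b)^2 + (b-c)^2 + (c-a)^2" by simp
  then show "(2*chi)^2 \<le> (1/3) * ((1+2*a)*(1+2*b - 3)*(1+2*c-3) + (1+2*b)*(1+2*c-3)*(1+2*a-3) + (1+2*c)*(1+2*a-3)*(1+2*b-3))"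
    using assms(4) by (simp add: power2_eq_square algebra_simps)
next
  define R where "R = (1+a)*(1+b)*(1+c)"
  define K where "K = 1+a+b+c"
  define t where "t = a + b + c - 3"
  have R0: "R \<ge> 0" unfolding R_def using assms by simp
  have "R^2 - (K*chi)^2 = (R - 8 - 4 * t - (t^2 + 4 * t + 8))^2"
    unfolding R_def K_def t_def power_mult_distrib assms(4) by (simp add: power2_eq_square algebra_simps)
  then have "(K*chi)^2 \<le> R^2" by (smt (verit) zero_le_power2)
  then have "K*chi \<le> R" using R0 power2_le_imp_le by blast
  then show "-24 * (-1 - c - a - b) * chi \<le> 3 * (1+2*a+1)*(1+2*b+1)*(1+2*c+1)"
    unfolding K_def R_def by (simp add: algebra_simps)
qed

theorem lemma3p4:
  fixes P0 P1 P2 :: "real^3"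
  assumes "P0 \<in> hyp" "P1 \<in> hyp" "P2 \<in> hyp"
    and "P0 \<noteq> P1" "P1 \<noteq> P2" "P2 \<noteq> P0"
  shows "let alpha = -1 + mink P0 P1 + mink P1 P2 + mink P2 P0;
             chi = mink (lcross P0 P1) P2;
             d0 = sqrt (1 - 2 * mink P1 P2);
             d1 = sqrt (1 - 2 * mink P2 P0);
             d2 = sqrt (1 - 2 * mink P0 P1);
             gamma = 3 * (d0^2 + 1) * (d1^2 + 1) * (d2^2 + 1)
         in (2 * chi)^2 \<le> (1/3) * (d0^2 * (d1^2 - 3) * (d2^2 - 3)
                                  + d1^2 * (d2^2 - 3) * (d0^2 - 3)
                                  + d2^2 * (d0^2 - 3) * (d1^2 - 3))
            \<and> - 24 * alpha * chi \<le> gamma"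
proof -
  define a where "a = - mink P1 P2"
  define b where "b = - mink P2 P0"
  define c where "c = - mink P0 P1"
  define chi where "chi = mink (lcross P0 P1) P2"
  have h: "mink P0 P0 = -1" "mink P1 P1 = -1" "mink P2 P2 = -1" using assms(1-3) unfolding hyp_def by auto
  have a1: "a \<ge> 1" unfolding a_def using rcs[OF assms(2,3)] by simp
  have b1: "b \<ge> 1" unfolding b_def using rcs[OF assms(3,1)] by simp
  have c1: "c \<ge> 1" unfolding c_def using rcs[OF assms(1,2)] by simp
  have chi2: "chi^2 = 1 + 2*a*b*c - a^2 - b^2 - c^2"
    unfolding chi_def gram h a_def b_def c_def by (simp add: power2_eq_square algebra_simps)
  have d0: "(sqrt (1 - 2 * mink P1 P2))^2 = 1 + 2*a" using a1 unfolding a_def by simp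
  have d1: "(sqrt (1 - 2 * mink P2 P0))^2 = 1 + 2*b" using b1 unfolding b_def by simp
  have d2: "(sqrt (1 - 2 * mink P0 P1))^2 = 1 + 2*c" using c1 unfolding c_def by simp
  have al: "-1 + mink P0 P1 + mink P1 P2 + mink P2 P0 = -1 - c - a - b" unfolding a_def b_def c_def by simp
  show ?thesis unfolding Let_def d0 d1 d2 al chi_def[symmetric]
    using final_real[OF a1 b1 c1 chi2] by simp
qed

end
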